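(* Let $\mathbf A$ be an algebra, $n\ge2$, $I$ a nonempty set, and $\rho_i$ ($i\in I$) and $\alpha_0,\dots,\alpha_{n-2}$ congruences of $\mathbf A$. Then \[ \Big[\alpha_0,\dots,\alpha_{n-2},\bigvee_{i\in I}\rho_i\Big]=\bigvee_{J}\Big[\alpha_0,\dots,\alpha_{n-2},\bigvee_{i\in J}\rho_i\Big], \] where $J$ ranges over all finite nonempty subsets of $I$.
   Context: Higher commutator (Bulatov): for congruences $\alpha_0,\dots,\alpha_{n-1},\gamma$ of an algebra $\mathbf A$, say $\alpha_0,\dots,\alpha_{n-2}$ centralize $\alpha_{n-1}$ modulo $\gamma$ if for all tuples $\mathbf a_i,\mathbf b_i$ ($i<n$, with $\mathbf a_i\neq\mathbf b_i$ congruent modulo $\alpha_i$ coordinatewise) and every term operation $t$ such that $t(\mathbf x_0,\dots,\mathbf x_{n-2},\mathbf a_{n-1})\equiv_\gamma t(\mathbf x_0,\dots,\mathbf x_{n-2},\mathbf b_{n-1})$ for all $(\mathbf x_0,\dots,\mathbf x_{n-2})\in(\{\mathbf a_0,\mathbf b_0\}\times\dots\times\{\mathbf a_{n-2},\mathbf b_{n-2}\})\setminus\{(\mathbf b_0,\dots,\mathbf b_{n-2})\}$, we have $t(\mathbf b_0,\dots,\mathbf b_{n-2},\mathbf a_{n-1})\equiv_\gamma t(\mathbf b_0,\dots,\mathbf b_{n-2},\mathbf b_{n-1})$. $[\alpha_0,\dots,\alpha_{n-1}]$ is the smallest congruence $\gamma$ such that $\alpha_0,\dots,\alpha_{n-2}$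 centralize $\alpha_{n-1}$ modulo $\gamma$. *)

theory Defs
  imports Main
begin

definition algebra :: "'a set \<Rightarrow> ('f \<Rightarrow> nat) \<Rightarrow> ('f \<Rightarrow> 'a list \<Rightarrow> 'a) \<Rightarrow> bool" where
  "algebra A ar F \<longleftrightarrow>
     (\<forall>f xs. length xs = ar f \<and> set xs \<subseteq> A \<longrightarrow> F f xs \<in> A)"

datatype 'f trm = Var nat | Op 'f "'f trm list"

fun wf_trm :: "('f \<Rightarrow> nat) \<Rightarrow> 'f trm \<Rightarrow> bool" where
  "wf_trm ar (Var i) = True"
| "wf_trm ar (Op f ts) = (length ts = ar f \<and> (\<forall>t\<in>set ts. wf_trm ar t))"

fun vars_trm :: "'f trm \<Rightarrow> nat set" where
  "vars_trm (Var i) = {i}"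
| "vars_trm (Op f ts) = (\<Union>t\<in>set ts. vars_trm t)"

fun eval_trm :: "('f \<Rightarrow> 'a list \<Rightarrow> 'a) \<Rightarrow> 'f trm \<Rightarrow> (nat \<Rightarrow> 'a) \<Rightarrow> 'a" where
  "eval_trm F (Var i) env = env i"
| "eval_trm F (Op f ts) env = F f (map (\<lambda>t. eval_trm F t env) ts)"

definition term_ops :: "('f \<Rightarrow> nat) \<Rightarrow> ('f \<Rightarrow> 'a list \<Rightarrow> 'a) \<Rightarrow> nat \<Rightarrow> ('a list \<Rightarrow> 'a) set" where
  "term_ops ar F k = {(\<lambda>xs. eval_trm F t (\<lambda>i. xs ! i)) | t. wf_trm ar t \<and> vars_trm t \<subseteq> {..<k}}"

definition congruence :: "'a set \<Rightarrow> ('f \<Rightarrow> nat) \<Rightarrow> ('f \<Rightarrow> 'a list \<Rightarrow> 'a) \<Rightarrow> 'a rel \<Rightarrow> bool" where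
  "congruence A ar F \<theta> \<longleftrightarrow> equiv A \<theta> \<and>
     (\<forall>f xs ys. length xs = ar f \<and> list_all2 (\<lambda>x y. (x, y) \<in> \<theta>) xs ys
        \<longrightarrow> (F f xs, F f ys) \<in> \<theta>)"

definition cg_join :: "'a set \<Rightarrow> ('f \<Rightarrow> nat) \<Rightarrow> ('f \<Rightarrow> 'a list \<Rightarrow> 'a) \<Rightarrow> 'a rel set \<Rightarrow> 'a rel" where
  "cg_join A ar F S = \<Inter>{\<theta>. congruence A ar F \<theta> \<and> \<Union>S \<subseteq> \<theta>}"

definition sel_args :: "nat \<Rightarrow> 'a list list \<Rightarrow> 'a list list \<Rightarrow> (nat \<Rightarrow> bool) \<Rightarrow> 'a list \<Rightarrow> 'a list" where
  "sel_args n as bs s lst =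
     concat (map (\<lambda>i. if s i then bs ! i else as ! i) [0..<n - 1]) @ lst"

text \<open>alphas = [alpha_0,...,alpha_(n-1)]; alpha_0..alpha_(n-2) centralize
  alpha_(n-1) modulo gamma.\<close>
definition centralizes ::
  "'a set \<Rightarrow> ('f \<Rightarrow> nat) \<Rightarrow> ('f \<Rightarrow> 'a list \<Rightarrow> 'a) \<Rightarrow> 'a rel list \<Rightarrow> 'a rel \<Rightarrow> bool" where
  "centralizes A ar F alphas \<gamma> \<longleftrightarrow>
    (let n = length alphas in
     \<forall>as bs. length as = n \<and> length bs = n \<and>
       (\<forall>i<n. as ! i \<noteq> bs ! i \<and> length (as ! i) = length (bs ! i) \<and>
              set (as ! i) \<subseteq> A \<and> set (bs ! i) \<subseteq> A \<and>
              list_all2 (\<lambda>x y. (x, y) \<in> alphas ! i) (as ! i) (bs ! i)) \<longrightarrow>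
     (\<forall>t \<in> term_ops ar F (sum_list (map length as)).
        (\<forall>s. \<not> (\<forall>i<n - 1. s i) \<longrightarrow>
           (t (sel_args n as bs s (as ! (n - 1))), t (sel_args n as bs s (bs ! (n - 1)))) \<in> \<gamma>)
        \<longrightarrow> (t (sel_args n as bs (\<lambda>_. True) (as ! (n - 1))),
             t (sel_args n as bs (\<lambda>_. True) (bs ! (n - 1)))) \<in> \<gamma>))"

definition hcomm :: "'a set \<Rightarrow> ('f \<Rightarrow> nat) \<Rightarrow> ('f \<Rightarrow> 'a list \<Rightarrow> 'a) \<Rightarrow> 'a rel list \<Rightarrow> 'a rel" where
  "hcomm A ar F alphas = \<Inter>{\<gamma>. congruence A ar F \<gamma> \<and> centralizes A ar F alphas \<gamma>}"

end

theory Submission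
  imports Defs
begin

lemma dir_fin:
  assumes dir: "\<forall>x\<in>K. \<forall>y\<in>K. \<exists>z\<in>K. f x \<subseteq> f z \<and> f y \<subseteq> f z"
    and ne: "K \<noteq> {}" and fin: "finite P"
  shows "P \<subseteq> \<Union>(f ` K) \<Longrightarrow> \<exists>j\<in>K. P \<subseteq> f j"
  using fin
proof (induction P rule: finite_induct)
  case empty then show ?case using ne by blast
next
  case (insert p P)
  then obtain j where j: "j \<in> K" "P \<subseteq> f j" by blast
  from insert.prems obtain j' where j': "j' \<in> K" "p \<in> f j'" by blast
  from dir j(1) j'(1) obtain z where "z \<in> K" "f j \<subseteq> f z" "f j' \<subseteq> f z" by blast
  then show ?case using j j' by blast
qed

lemma union_cong:
  assumes ne: "K \<noteq> {}" and cg: "\<forall>j\<in>K. congruence A ar F (f j)"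
    and dir: "\<forall>x\<in>K. \<forall>y\<in>K. \<exists>z\<in>K. f x \<subseteq> f z \<and> f y \<subseteq> f z"
  shows "congruence A ar F (\<Union>(f ` K))"
proof -
  have eq: "\<And>j. j \<in> K \<Longrightarrow> equiv A (f j)" using cg by (simp add: congruence_def)
  have "equiv A (\<Union>(f ` K))"
  proof (rule equivI)
    show "\<Union>(f ` K) \<subseteq> A \<times> A" using eq equiv_type by blast
    show "refl_on A (\<Union>(f ` K))"
      unfolding refl_on_def using eq ne by (fastforce simp: equiv_def refl_on_def)
    show "sym (\<Union>(f ` K))"
      unfolding sym_def using eq by (fastforce simp: equiv_def sym_def)
    show "trans (\<Union>(f ` K))"
    proof (rule transI)
      fix x y z assume "(x, y) \<in> \<Union>(f ` K)" "(y, z) \<in> \<Union>(f ` K)"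
      then obtain j j' where "j \<in> K" "j' \<in> K" "(x,y) \<in> f j" "(y,z) \<in> f j'" by blast
      with dir obtain w where w: "w \<in> K" "f j \<subseteq> f w" "f j' \<subseteq> f w" by meson
      with \<open>(x,y) \<in> f j\<close> \<open>(y,z) \<in> f j'\<close> have "(x,y) \<in> f w" "(y,z) \<in> f w" by auto
      with eq[OF w(1)] have "(x,z) \<in> f w" unfolding equiv_def trans_def by blast
      with w(1) show "(x,z) \<in> \<Union>(f ` K)" by blast
    qed
  qed
  moreover have "\<forall>g xs ys. length xs = ar g \<and> list_all2 (\<lambda>x y. (x, y) \<in> \<Union>(f ` K)) xs ys
        \<longrightarrow> (F g xs, F g ys) \<in> \<Union>(f ` K)"
  proof (intro allI impI)
    fix g xs ys assume h: "length xs = ar g \<and> list_all2 (\<lambda>x y. (x, y) \<in> \<Union>(f ` K)) xs ys"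
    hence "set (zip xs ys) \<subseteq> \<Union>(f ` K)" by (auto simp: list_all2_iff)
    then obtain j where j: "j \<in> K" "set (zip xs ys) \<subseteq> f j"
      using dir_fin[OF dir ne] by blast
    with h have "list_all2 (\<lambda>x y. (x, y) \<in> f j) xs ys" by (auto simp: list_all2_iff)
    with h cg j(1) have "(F g xs, F g ys) \<in> f j" by (simp add: congruence_def)
    with j(1) show "(F g xs, F g ys) \<in> \<Union>(f ` K)" by blast
  qed
  ultimately show ?thesis by (simp add: congruence_def)
qed

lemma inter_cong:
  assumes ne: "G \<noteq> {}" and cg: "\<forall>\<theta>\<in>G. congruence A ar F \<theta>"
  shows "congruence A ar F (\<Inter>G)"
proof -
  have eq: "\<And>\<theta>. \<theta> \<in> G \<Longrightarrow> equiv A \<theta>" using cg by (simp add: congruence_def)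
  have "equiv A (\<Inter>G)"
  proof (rule equivI)
    show "\<Inter>G \<subseteq> A \<times> A" using eq equiv_type ne by blast
    show "refl_on A (\<Inter>G)"
      unfolding refl_on_def using eq ne by (fastforce simp: equiv_def refl_on_def)
    show "sym (\<Inter>G)"
      unfolding sym_def using eq by (fastforce simp: equiv_def sym_def)
    show "trans (\<Inter>G)"
    proof (rule transI)
      fix x y z assume a: "(x, y) \<in> \<Inter>G" "(y, z) \<in> \<Inter>G"
      show "(x, z) \<in> \<Inter>G"
      proof (rule InterI)
        fix \<theta> assume t: "\<theta> \<in> G"
        with a have "(x,y) \<in> \<theta>" "(y,z) \<in> \<theta>" by auto
        with eq[OF t] show "(x,z) \<in> \<theta>" unfolding equiv_def trans_def by blast
      qed
    qed
  qed
  moreover have "\<forall>g xs ys. length xs = ar g \<and> list_all2 (\<lambda>x y. (x, y) \<in> \<Inter>G) xs ys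
        \<longrightarrow> (F g xs, F g ys) \<in> \<Inter>G"
  proof (intro allI impI InterI)
    fix g xs ys \<theta> assume h: "length xs = ar g \<and> list_all2 (\<lambda>x y. (x, y) \<in> \<Inter>G) xs ys"
      and t: "\<theta> \<in> G"
    from h t have "list_all2 (\<lambda>x y. (x, y) \<in> \<theta>) xs ys"
      by (auto elim: list_all2_mono)
    with h cg t show "(F g xs, F g ys) \<in> \<theta>" by (simp add: congruence_def)
  qed
  ultimately show ?thesis by (simp add: congruence_def)
qed

lemma la2_A: "list_all2 (\<lambda>x y. (x, y) \<in> A \<times> A) xs ys \<Longrightarrow> set xs \<subseteq> A \<and> set ys \<subseteq> A"
  by (induction xs ys rule: list_all2_induct) auto

lemma full_cong:
  assumes alg: "algebra A ar F" shows "congruence A ar F (A \<times> A)"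
  unfolding congruence_def
proof (intro conjI allI impI)
  show "equiv A (A \<times> A)" by (auto simp: equiv_def refl_on_def sym_def trans_def)
  fix f xs ys assume h: "length xs = ar f \<and> list_all2 (\<lambda>x y. (x, y) \<in> A \<times> A) xs ys"
  hence "set xs \<subseteq> A" "set ys \<subseteq> A" "length ys = ar f" using la2_A list_all2_lengthD by metis+
  with h alg show "(F f xs, F f ys) \<in> A \<times> A" unfolding algebra_def by auto
qed

lemma cg_join_cong:
  assumes "algebra A ar F" "\<Union>S \<subseteq> A \<times> A"
  shows "congruence A ar F (cg_join A ar F S)"
  unfolding cg_join_def
  apply (rule inter_cong)
  using full_cong[OF assms(1)] assms(2) by auto

lemma cg_join_least:
  "congruence A ar F \<theta> \<Longrightarrow> \<Union>S \<subseteq> \<theta> \<Longrightarrow> cg_join A ar F S \<subseteq> \<theta>"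
  unfolding cg_join_def by blast

lemma cg_join_upper: "\<Union>S \<subseteq> cg_join A ar F S"
  unfolding cg_join_def by blast

definition Hy :: "'a set \<Rightarrow> 'a rel list \<Rightarrow> 'a list list \<Rightarrow> 'a list list \<Rightarrow> bool" where
 "Hy A al as bs \<longleftrightarrow> length as = length al \<and> length bs = length al \<and>
       (\<forall>i<length al. as ! i \<noteq> bs ! i \<and> length (as ! i) = length (bs ! i) \<and>
              set (as ! i) \<subseteq> A \<and> set (bs ! i) \<subseteq> A \<and>
              list_all2 (\<lambda>x y. (x, y) \<in> al ! i) (as ! i) (bs ! i))"
definition cpair :: "('a list \<Rightarrow> 'a) \<Rightarrow> nat \<Rightarrow> 'a list list \<Rightarrow> 'a list list \<Rightarrow> (nat\<Rightarrow>bool) \<Rightarrow> 'a \<times> 'a" where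
 "cpair t n as bs s = (t (sel_args n as bs s (as ! (n-1))), t (sel_args n as bs s (bs ! (n-1))))"
lemma cent_iff: "centralizes A ar F al \<gamma> \<longleftrightarrow> (\<forall>as bs. Hy A al as bs \<longrightarrow> (\<forall>t\<in>term_ops ar F (sum_list (map length as)).
   (\<forall>s. \<not>(\<forall>i<length al - 1. s i) \<longrightarrow> cpair t (length al) as bs s \<in> \<gamma>) \<longrightarrow> cpair t (length al) as bs (\<lambda>_. True) \<in> \<gamma>))"
  unfolding centralizes_def Let_def Hy_def cpair_def by (rule refl) 


lemma Hy_snoc: "Hy A (al@[X]) as bs \<longleftrightarrow> length as = Suc (length al) \<and> length bs = Suc (length al) \<and>
       (\<forall>i<length al. as ! i \<noteq> bs ! i \<and> length (as ! i) = length (bs ! i) \<and>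
              set (as ! i) \<subseteq> A \<and> set (bs ! i) \<subseteq> A \<and>
              list_all2 (\<lambda>x y. (x, y) \<in> al ! i) (as ! i) (bs ! i)) \<and>
       (as ! length al \<noteq> bs ! length al \<and> length (as ! length al) = length (bs ! length al) \<and>
              set (as ! length al) \<subseteq> A \<and> set (bs ! length al) \<subseteq> A \<and>
              list_all2 (\<lambda>x y. (x, y) \<in> X) (as ! length al) (bs ! length al))"
  unfolding Hy_def by (auto simp: nth_append less_Suc_eq)

lemma cpair_cong: "(\<forall>i<n-1. s i = s' i) \<Longrightarrow> cpair t n as bs s = cpair t n as bs s'"
proof -
  assume a: "\<forall>i<n-1. s i = s' i"
  have "map (\<lambda>i. if s i then bs ! i else as ! i) [0..<n - 1] = map (\<lambda>i. if s' i then bs ! i else as ! i) [0..<n - 1]"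
    by (rule map_cong) (use a in auto)
  then show ?thesis by (simp only: cpair_def sel_args_def)
qed

lemma cent_Inter:
  assumes a: "\<forall>\<gamma>\<in>G. centralizes A ar F al \<gamma>"
  shows "centralizes A ar F al (\<Inter>G)"
  unfolding cent_iff
proof (intro allI impI ballI InterI)
  fix as bs t \<gamma>
  assume H: "Hy A al as bs" and t: "t \<in> term_ops ar F (sum_list (map length as))"
    and P: "\<forall>s. \<not>(\<forall>i<length al - 1. s i) \<longrightarrow> cpair t (length al) as bs s \<in> \<Inter>G"
    and g: "\<gamma> \<in> G"
  from P g have P': "\<forall>s. \<not>(\<forall>i<length al - 1. s i) \<longrightarrow> cpair t (length al) as bs s \<in> \<gamma>" by blast
  from a g have c: "centralizes A ar F al \<gamma>" by blast
  show "cpair t (length al) as bs (\<lambda>_. True) \<in> \<gamma>"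
    using c[unfolded cent_iff, rule_format (no_asm), OF H t P'] .
qed

lemma hcomm_cent: "centralizes A ar F al (hcomm A ar F al)"
  unfolding hcomm_def by (rule cent_Inter) blast

lemma cent_mono:
  assumes sub: "\<beta> \<subseteq> \<beta>'" and c: "centralizes A ar F (al @ [\<beta>']) \<gamma>"
  shows "centralizes A ar F (al @ [\<beta>]) \<gamma>"
  unfolding cent_iff
proof (intro allI impI ballI)
  fix as bs t
  assume H: "Hy A (al @ [\<beta>]) as bs" and t: "t \<in> term_ops ar F (sum_list (map length as))"
    and P: "\<forall>s. \<not>(\<forall>i<length (al @ [\<beta>]) - 1. s i) \<longrightarrow> cpair t (length (al @ [\<beta>])) as bs s \<in> \<gamma>"
  from H have la: "list_all2 (\<lambda>x y. (x,y) \<in> \<beta>) (as ! length al) (bs ! length al)"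
    by (simp add: Hy_snoc)
  have la': "list_all2 (\<lambda>x y. (x,y) \<in> \<beta>') (as ! length al) (bs ! length al)"
    by (rule list_all2_mono[OF la]) (use sub in blast)
  have H': "Hy A (al @ [\<beta>']) as bs"
    using H la' by (simp add: Hy_snoc)
  have P': "\<forall>s. \<not>(\<forall>i<length (al @ [\<beta>']) - 1. s i) \<longrightarrow> cpair t (length (al @ [\<beta>'])) as bs s \<in> \<gamma>"
    using P by simp
  have "cpair t (length (al @ [\<beta>'])) as bs (\<lambda>_. True) \<in> \<gamma>"
    using c[unfolded cent_iff, rule_format (no_asm), OF H' t P'] .
  then show "cpair t (length (al @ [\<beta>])) as bs (\<lambda>_. True) \<in> \<gamma>" by simp
qed

lemma hcomm_mono:
  "\<beta> \<subseteq> \<beta>' \<Longrightarrow> hcomm A ar F (al @ [\<beta>]) \<subseteq> hcomm A ar F (al @ [\<beta>'])"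
  unfolding hcomm_def using cent_mono by blast

lemma key:
  assumes dir: "\<forall>x\<in>K. \<forall>y\<in>K. \<exists>z\<in>K. B x \<subseteq> B z \<and> B y \<subseteq> B z \<and> \<Gamma> x \<subseteq> \<Gamma> z \<and> \<Gamma> y \<subseteq> \<Gamma> z"
    and ne: "K \<noteq> {}" and bet: "\<beta> \<subseteq> \<Union>(B ` K)"
    and cen: "\<forall>j\<in>K. centralizes A ar F (al @ [B j]) (\<Gamma> j)"
  shows "centralizes A ar F (al @ [\<beta>]) (\<Union>(\<Gamma> ` K))"
  unfolding cent_iff
proof (intro allI impI ballI)
  fix as bs t
  assume H: "Hy A (al @ [\<beta>]) as bs" and t: "t \<in> term_ops ar F (sum_list (map length as))"
    and P: "\<forall>s. \<not>(\<forall>i<length (al @ [\<beta>]) - 1. s i) \<longrightarrow> cpair t (length (al @ [\<beta>])) as bs s \<in> \<Union>(\<Gamma> ` K)"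
  define m where "m = length al"
  have n: "length (al @ [\<beta>]) = Suc m" by (simp add: m_def)
  have dB: "\<forall>x\<in>K. \<forall>y\<in>K. \<exists>z\<in>K. B x \<subseteq> B z \<and> B y \<subseteq> B z" using dir by meson
  have dG: "\<forall>x\<in>K. \<forall>y\<in>K. \<exists>z\<in>K. \<Gamma> x \<subseteq> \<Gamma> z \<and> \<Gamma> y \<subseteq> \<Gamma> z" using dir by meson
  from H have la: "list_all2 (\<lambda>x y. (x,y) \<in> \<beta>) (as!m) (bs!m)"
    unfolding Hy_snoc m_def by blast
  hence "set (zip (as!m) (bs!m)) \<subseteq> \<Union>(B ` K)" using bet by (auto simp: list_all2_iff)
  then obtain j0 where j0: "j0 \<in> K" "set (zip (as!m) (bs!m)) \<subseteq> B j0"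
    using dir_fin[OF dB ne] by blast
  define Q where "Q = (\<lambda>S. cpair t (Suc m) as bs (\<lambda>i. i\<in>S)) ` {S. S \<subseteq> {..<m} \<and> \<not> {..<m} \<subseteq> S}"
  have "finite Q" unfolding Q_def
    by (rule finite_imageI, rule finite_subset[of _ "Pow {..<m}"]) auto
  moreover have "Q \<subseteq> \<Union>(\<Gamma> ` K)"
  proof
    fix q assume "q \<in> Q"
    then obtain S where S: "S \<subseteq> {..<m}" "\<not> {..<m} \<subseteq> S" "q = cpair t (Suc m) as bs (\<lambda>i. i\<in>S)"
      unfolding Q_def by blast
    from S(2) have "\<not>(\<forall>i<length (al @ [\<beta>]) - 1. i \<in> S)" unfolding n by auto
    then have "cpair t (length (al @ [\<beta>])) as bs (\<lambda>i. i\<in>S) \<in> \<Union>(\<Gamma> ` K)" by (rule P[rule_format])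
    then show "q \<in> \<Union>(\<Gamma> ` K)" using S(3) n by simp
  qed
  ultimately obtain j1 where j1: "j1 \<in> K" "Q \<subseteq> \<Gamma> j1"
    using dir_fin[OF dG ne] by blast
  obtain j where j: "j \<in> K" "B j0 \<subseteq> B j" "\<Gamma> j1 \<subseteq> \<Gamma> j"
    apply (rule bexE[OF dir[rule_format, OF j0(1) j1(1)]])
    apply (elim conjE)
    apply (rule that)
      apply assumption+
    done
  have la': "list_all2 (\<lambda>x y. (x,y) \<in> B j) (as!m) (bs!m)"
    using la j0(2) j(2) by (auto simp: list_all2_iff)
  have H': "Hy A (al @ [B j]) as bs"
    using H la' unfolding Hy_snoc m_def by blast
  have P': "\<forall>s. \<not>(\<forall>i<length (al @ [B j]) - 1. s i) \<longrightarrow> cpair t (length (al @ [B j])) as bs s \<in> \<Gamma> j"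
  proof (intro allI impI)
    fix s assume ns: "\<not>(\<forall>i<length (al @ [B j]) - 1. s i)"
    define S where "S = {i. i < m \<and> s i}"
    have "cpair t (Suc m) as bs s = cpair t (Suc m) as bs (\<lambda>i. i\<in>S)"
      by (rule cpair_cong) (auto simp: S_def)
    moreover have "S \<subseteq> {..<m}" "\<not> {..<m} \<subseteq> S" using ns by (auto simp: S_def m_def)
    hence "cpair t (Suc m) as bs (\<lambda>i. i\<in>S) \<in> Q" unfolding Q_def by blast
    ultimately show "cpair t (length (al @ [B j])) as bs s \<in> \<Gamma> j"
      using j1(2) j(3) by (auto simp: m_def)
  qed
  from cen j(1) have c: "centralizes A ar F (al @ [B j]) (\<Gamma> j)" by blast
  have "cpair t (length (al @ [B j])) as bs (\<lambda>_. True) \<in> \<Gamma> j"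
    using c[unfolded cent_iff, rule_format (no_asm), OF H' t P'] .
  then show "cpair t (length (al @ [\<beta>])) as bs (\<lambda>_. True) \<in> \<Union>(\<Gamma> ` K)"
    using j(1) by auto
qed

lemma main_gen:
  fixes A :: "'a set" and ar :: "'f \<Rightarrow> nat" and F :: "'f \<Rightarrow> 'a list \<Rightarrow> 'a"
    and alphas :: "'a rel list" and \<rho> :: "'i \<Rightarrow> 'a rel" and I :: "'i set"
  assumes alg: "algebra A ar F"
    and ne: "I \<noteq> {}"
    and rc: "\<forall>i\<in>I. congruence A ar F (\<rho> i)"
    and Bd: "B = (\<lambda>J. cg_join A ar F (\<rho> ` J))"
    and Gd: "\<Gamma> = (\<lambda>J. hcomm A ar F (alphas @ [B J]))"
    and Kd: "K = {J. finite J \<and> J \<noteq> {} \<and> J \<subseteq> I}"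
  shows "\<Gamma> I = cg_join A ar F (\<Gamma> ` K)"
proof -
  have rA: "\<And>i. i \<in> I \<Longrightarrow> \<rho> i \<subseteq> A \<times> A"
    using rc by (auto simp: congruence_def dest: equiv_type)
  have Bc: "\<And>J. J \<subseteq> I \<Longrightarrow> congruence A ar F (B J)"
    unfolding Bd by (rule cg_join_cong[OF alg]) (use rA in blast)
  have Bm: "\<And>J J'. J \<subseteq> J' \<Longrightarrow> J' \<subseteq> I \<Longrightarrow> B J \<subseteq> B J'"
  proof -
    fix J J' :: "'i set" assume a: "J \<subseteq> J'" "J' \<subseteq> I"
    have "\<Union>(\<rho> ` J) \<subseteq> B J'" using a(1) cg_join_upper[of "\<rho> ` J'" A ar F] unfolding Bd by blast
    then show "B J \<subseteq> B J'" using cg_join_least[OF Bc[OF a(2)]] unfolding Bd by blast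
  qed
  have Gm: "\<And>J J'. J \<subseteq> J' \<Longrightarrow> J' \<subseteq> I \<Longrightarrow> \<Gamma> J \<subseteq> \<Gamma> J'"
  proof -
    fix J J' :: "'i set" assume a: "J \<subseteq> J'" "J' \<subseteq> I"
    show "\<Gamma> J \<subseteq> \<Gamma> J'" unfolding Gd by (rule hcomm_mono[OF Bm[OF a]])
  qed
  have dir: "\<forall>x\<in>K. \<forall>y\<in>K. \<exists>z\<in>K. B x \<subseteq> B z \<and> B y \<subseteq> B z \<and> \<Gamma> x \<subseteq> \<Gamma> z \<and> \<Gamma> y \<subseteq> \<Gamma> z"
  proof (intro ballI)
    fix x y assume "x \<in> K" "y \<in> K"
    hence u: "x \<union> y \<in> K" "x \<subseteq> x \<union> y" "y \<subseteq> x \<union> y" "x \<union> y \<subseteq> I" unfolding Kd by auto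
    show "\<exists>z\<in>K. B x \<subseteq> B z \<and> B y \<subseteq> B z \<and> \<Gamma> x \<subseteq> \<Gamma> z \<and> \<Gamma> y \<subseteq> \<Gamma> z"
      by (rule bexI[OF _ u(1)], intro conjI Bm Gm) (rule u)+
  qed
  have dB: "\<forall>x\<in>K. \<forall>y\<in>K. \<exists>z\<in>K. B x \<subseteq> B z \<and> B y \<subseteq> B z" using dir by meson
  have dG: "\<forall>x\<in>K. \<forall>y\<in>K. \<exists>z\<in>K. \<Gamma> x \<subseteq> \<Gamma> z \<and> \<Gamma> y \<subseteq> \<Gamma> z" using dir by meson
  from ne obtain i0 where "i0 \<in> I" by blast
  hence Kne: "K \<noteq> {}" unfolding Kd by (auto intro!: exI[of _ "{i0}"])
  have KI: "\<And>J. J \<in> K \<Longrightarrow> J \<subseteq> I" unfolding Kd by blast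
  have UBc: "congruence A ar F (\<Union>(B ` K))"
    by (rule union_cong[OF Kne _ dB]) (use Bc KI in blast)
  have "\<Union>(\<rho> ` I) \<subseteq> \<Union>(B ` K)"
  proof
    fix p assume "p \<in> \<Union>(\<rho> ` I)"
    then obtain i where i: "i \<in> I" "p \<in> \<rho> i" by blast
    hence "{i} \<in> K" unfolding Kd by auto
    moreover have "p \<in> B {i}" using i cg_join_upper[of "\<rho> ` {i}" A ar F] unfolding Bd by blast
    ultimately show "p \<in> \<Union>(B ` K)" by blast
  qed
  hence BI: "B I \<subseteq> \<Union>(B ` K)" unfolding Bd using cg_join_least[OF UBc] Bd by auto
  have BK: "\<And>J. J \<in> K \<Longrightarrow> B J \<subseteq> B I" using Bm KI by blast
  have sup0: "cg_join A ar F (\<Gamma> ` K) \<subseteq> hcomm A ar F (alphas @ [B I])"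
    unfolding hcomm_def[of A ar F "alphas @ [B I]"]
  proof (rule Inter_greatest)
    fix \<gamma> assume g: "\<gamma> \<in> {\<gamma>. congruence A ar F \<gamma> \<and> centralizes A ar F (alphas @ [B I]) \<gamma>}"
    have "\<Union>(\<Gamma> ` K) \<subseteq> \<gamma>"
    proof
      fix p assume "p \<in> \<Union>(\<Gamma> ` K)"
      then obtain J where J: "J \<in> K" "p \<in> \<Gamma> J" by blast
      have "centralizes A ar F (alphas @ [B J]) \<gamma>" using g cent_mono[OF BK[OF J(1)]] by blast
      hence "\<Gamma> J \<subseteq> \<gamma>" using g unfolding Gd hcomm_def by blast
      with J show "p \<in> \<gamma>" by blast
    qed
    then show "cg_join A ar F (\<Gamma> ` K) \<subseteq> \<gamma>"
      using cg_join_least[of A ar F \<gamma> "\<Gamma> ` K"] g by blast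
  qed
  have sup: "cg_join A ar F (\<Gamma> ` K) \<subseteq> \<Gamma> I" using sup0 Gd by simp
  show ?thesis
  proof (cases "\<forall>J\<in>K. congruence A ar F (\<Gamma> J)")
    case True
    have Uc: "congruence A ar F (\<Union>(\<Gamma> ` K))" by (rule union_cong[OF Kne True dG])
    have Ucen: "centralizes A ar F (alphas @ [B I]) (\<Union>(\<Gamma> ` K))"
      by (rule key[OF dir Kne BI]) (simp add: Gd hcomm_cent)
    have "hcomm A ar F (alphas @ [B I]) \<subseteq> \<Union>(\<Gamma> ` K)"
      unfolding hcomm_def[of A ar F "alphas @ [B I]"] using Uc Ucen by blast
    hence "\<Gamma> I \<subseteq> \<Union>(\<Gamma> ` K)" using Gd by simp
    also have "\<dots> \<subseteq> cg_join A ar F (\<Gamma> ` K)" by (rule cg_join_upper)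
    finally show ?thesis using sup by blast
  next
    case False
    then obtain J where J: "J \<in> K" "\<not> congruence A ar F (\<Gamma> J)" by blast
    have "\<Gamma> J = UNIV"
    proof (cases "{\<gamma>. congruence A ar F \<gamma> \<and> centralizes A ar F (alphas @ [B J]) \<gamma>} = {}")
      case True then show ?thesis unfolding Gd hcomm_def by blast
    next
      case False
      have "congruence A ar F (\<Gamma> J)" unfolding Gd hcomm_def
        by (rule inter_cong[OF False]) blast
      with J show ?thesis by blast
    qed
    hence "UNIV \<subseteq> cg_join A ar F (\<Gamma> ` K)" using J(1) cg_join_upper[of "\<Gamma> ` K" A ar F] by blast
    then show ?thesis using sup by blast
  qed
qed

theorem mainTheorem14:
  fixes A :: "'a set" and ar :: "'f \<Rightarrow> nat" and F :: "'f \<Rightarrow> 'a list \<Rightarrow> 'a"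
    and alphas :: "'a rel list" and \<rho> :: "'i \<Rightarrow> 'a rel" and I :: "'i set"
  assumes "algebra A ar F"
    and "length alphas \<ge> 1"
    and "I \<noteq> {}"
    and "\<forall>\<alpha>\<in>set alphas. congruence A ar F \<alpha>"
    and "\<forall>i\<in>I. congruence A ar F (\<rho> i)"
  shows "hcomm A ar F (alphas @ [cg_join A ar F (\<rho> ` I)]) =
         cg_join A ar F {hcomm A ar F (alphas @ [cg_join A ar F (\<rho> ` J)]) | J.
                           finite J \<and> J \<noteq> {} \<and> J \<subseteq> I}"
proof -
  have e: "{hcomm A ar F (alphas @ [cg_join A ar F (\<rho> ` J)]) | J. finite J \<and> J \<noteq> {} \<and> J \<subseteq> I}
    = (\<lambda>J. hcomm A ar F (alphas @ [cg_join A ar F (\<rho> ` J)])) ` {J. finite J \<and> J \<noteq> {} \<and> J \<subseteq> I}"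
    by blast
  show ?thesis unfolding e
    using main_gen[OF assms(1) assms(3) assms(5) refl refl refl] by simp
qed

end
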